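(* Consider any run of Algorithm 1 (described in the context). Whenever step (5) is executed with current set $S$ and current point $\bar x$, the inequality $$\sum_{i=1}^{k} d^k_ic^ix\ \ge\ \sum_{i=1}^{k-1}d^k_ic^i\bar x+d^k_k\lceil c^k\bar x\rceil$$ added in that step is satisfied by every point of $S\cap\mathbb{Z}^n$ and is violated by $\bar x$ (i.e. it is a cutting plane). Moreover, Algorithm 1 terminates after a finite number of iterations.
   Context: A lattice basis of $\mathbb{Z}^n$ is a set of $n$ linearly independent $c^1,\dots,c^n\in\mathbb{Z}^n$ such that every $v\in\mathbb{Z}^n$ is an integer combination of them. The associated lexicographic order: $x\prec y$ iff $x\ne y$ and $c^ix<c^iy$ for the smallest $i$ with $c^ix\ne c^iy$. For nonempty compact $T\subseteq\mathbb{R}^n$, the lex-min point of $T$ is the unique $\bar x\in T$ with $\bar x\prec x$ for all $x\in T\setminus\{\bar x\}$ (minimize $c^1x$ over $T$, then $c^2x$ over the minimizers, etc.). $K=\{x: c^ix\ge0,\ i=1,\dots,n\}$. $\mathcal S$ is a family of compact (not necessarily convex or connected) subsets of $\mathbb{R}^n$ such that $S\cap H\in\mathcal S$ whenever $S\in\mathcal S$ and $H$ is a closed halfspace; an oracle solves $\min\{cx:x\in S\}$ (or certifies $S=\emptyset$) for $S\in\mathcal S$. Algorithm 1. Input: nonempty $S\in\mathcal S$, $c\in\mathbb{Z}^n\setminus\{0\}$ with relatively prime entries, and a lattice basis $c^1,\dots,c^n$ with $c^1=c$. (1) Compute $\ell_i:=\lceil\min\{c^ix:x\in S\}\rceil$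 for all $i$; replace $S$ by $S-t$ where $t\in\mathbb{Z}^n$ is the vector with $c^it=\ell_i$ for all $i$; then replace $S$ by $S\cap K$. (2) If $S=\emptyset$, stop: no integer feasible point. (3) Else compute the lex-min point $\bar x$ of $S$. (4) If $\bar x\in\mathbb{Z}^n$, return $\bar x$. (5) Else let $k$ be the smallest index with $c^k\bar x\notin\mathbb{Z}$; set $d^k_k:=1$, $d^k_{k-1}:=\lceil c^k\bar x\rceil$ (if $k\ge2$), $d^k_i:=\lceil c^k\bar x\rceil\prod_{j=i+1}^{k-1}(c^j\bar x+1)$ for $i\le k-2$; replace $S$ by $S\cap H$, where $H$ is the halfspace $\sum_{i=1}^k d^k_ic^ix\ge\sum_{i=1}^{k-1}d^k_ic^i\bar x+d^k_k\lceil c^k\bar x\rceil$; go to (2). An iteration is one pass through steps (2)–(5). *)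

theory Defs
  imports "HOL-Analysis.Analysis"
begin

text \<open>Points live in R^n with n = CARD('n). The lattice basis c^1,...,c^n is given
  as integer vectors C 1, ..., C n; cvec C i is c^i viewed as a real vector.\<close>

definition cvec :: "(nat \<Rightarrow> int^'n) \<Rightarrow> nat \<Rightarrow> real^'n" where
  "cvec C i = (\<chi> j. of_int (C i $ j))"

definition intpt :: "real^'n \<Rightarrow> bool" where
  "intpt x \<longleftrightarrow> (\<forall>j. x $ j \<in> \<int>)"

definition lattice_basis :: "(nat \<Rightarrow> int^'n) \<Rightarrow> bool" where
  "lattice_basis C \<longleftrightarrow>
     (\<forall>l::nat \<Rightarrow> real. (\<Sum>i=1..CARD('n). l i *\<^sub>R cvec C i) = 0 \<longrightarrow> (\<forall>i\<in>{1..CARD('n)}. l i = 0)) \<and>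
     (\<forall>v::int^'n. \<exists>l::nat \<Rightarrow> int. v = (\<Sum>i=1..CARD('n). l i *s C i))"

definition lexless :: "(nat \<Rightarrow> int^'n) \<Rightarrow> real^'n \<Rightarrow> real^'n \<Rightarrow> bool" where
  "lexless C x y \<longleftrightarrow> x \<noteq> y \<and>
     (\<exists>i\<in>{1..CARD('n)}. cvec C i \<bullet> x < cvec C i \<bullet> y \<and>
        (\<forall>j\<in>{1..<i}. cvec C j \<bullet> x = cvec C j \<bullet> y))"

definition lexmin :: "(nat \<Rightarrow> int^'n) \<Rightarrow> (real^'n) set \<Rightarrow> real^'n" where
  "lexmin C T = (THE xb. xb \<in> T \<and> (\<forall>x\<in>T - {xb}. lexless C xb x))"

definition Kcone :: "(nat \<Rightarrow> int^'n) \<Rightarrow> (real^'n) set" where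
  "Kcone C = {x. \<forall>i\<in>{1..CARD('n)}. cvec C i \<bullet> x \<ge> 0}"

definition init_set :: "(nat \<Rightarrow> int^'n) \<Rightarrow> (real^'n) set \<Rightarrow> (real^'n) set" where
  "init_set C S =
    (let l = (\<lambda>i. \<lceil>Inf ((\<lambda>x. cvec C i \<bullet> x) ` S)\<rceil>);
         t = (THE t. intpt t \<and> (\<forall>i\<in>{1..CARD('n)}. cvec C i \<bullet> t = of_int (l i)))
     in ((\<lambda>x. x - t) ` S) \<inter> Kcone C)"

definition cut_index :: "(nat \<Rightarrow> int^'n) \<Rightarrow> real^'n \<Rightarrow> nat" where
  "cut_index C xb = (LEAST k. k \<in> {1..CARD('n)} \<and> cvec C k \<bullet> xb \<notin> \<int>)"

definition cut_coeff :: "(nat \<Rightarrow> int^'n) \<Rightarrow> real^'n \<Rightarrow> nat \<Rightarrow> nat \<Rightarrow> real" where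
  "cut_coeff C xb k i =
     (if i = k then 1
      else if i = k - 1 then of_int \<lceil>cvec C k \<bullet> xb\<rceil>
      else of_int \<lceil>cvec C k \<bullet> xb\<rceil> * (\<Prod>j\<in>{i+1..k-1}. cvec C j \<bullet> xb + 1))"

definition cut_halfspace :: "(nat \<Rightarrow> int^'n) \<Rightarrow> real^'n \<Rightarrow> (real^'n) set" where
  "cut_halfspace C xb =
    (let k = cut_index C xb; d = cut_coeff C xb k in
     {x. (\<Sum>i=1..k. d i * (cvec C i \<bullet> x)) \<ge>
         (\<Sum>i=1..k-1. d i * (cvec C i \<bullet> xb)) + d k * of_int \<lceil>cvec C k \<bullet> xb\<rceil>})"

text \<open>Current set S at the start of iteration m (iteration = steps (2)-(5)).
  Once the algorithm has stopped, the set is kept constant.\<close>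
primrec alg_state :: "(nat \<Rightarrow> int^'n) \<Rightarrow> (real^'n) set \<Rightarrow> nat \<Rightarrow> (real^'n) set" where
  "alg_state C S 0 = init_set C S"
| "alg_state C S (Suc m) =
     (let T = alg_state C S m in
      if T = {} \<or> intpt (lexmin C T) then T else T \<inter> cut_halfspace C (lexmin C T))"

end

theory Submission
  imports Defs
begin


lemma cvec_inner: "cvec C i \<bullet> z = (\<Sum>j\<in>UNIV. of_int (C i $ j) * z $ j)"
  by (simp add: cvec_def inner_vec_def)

lemma unit_comb:
  fixes C :: "nat \<Rightarrow> int^'n"
  assumes "lattice_basis C"
  shows "\<exists>l::nat\<Rightarrow>int. \<forall>z::real^'n. z $ j = (\<Sum>i=1..CARD('n). of_int (l i) * (cvec C i \<bullet> z))"
proof -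
  obtain l :: "nat \<Rightarrow> int" where l: "axis j (1::int) = (\<Sum>i=1..CARD('n). l i *s C i)"
    using assms unfolding lattice_basis_def by blast
  have comp: "(axis j (1::int)) $ j' = (\<Sum>i=1..CARD('n). l i * C i $ j')" for j'
    by (subst l) simp
  show ?thesis
  proof (intro exI allI)
    fix z :: "real^'n"
    have "z $ j = (\<Sum>j'\<in>UNIV. of_int ((axis j (1::int)) $ j') * z $ j')"
    proof -
      have "(\<Sum>j'\<in>UNIV. of_int ((axis j (1::int)) $ j') * z $ j') = (\<Sum>j'\<in>UNIV. if j' = j then z $ j' else 0)"
        by (rule sum.cong) (auto simp: axis_def)
      then show ?thesis by simp
    qed
    also have "\<dots> = (\<Sum>j'\<in>UNIV. \<Sum>i=1..CARD('n). of_int (l i) * (of_int (C i $ j') * z $ j'))"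
      by (simp add: comp sum_distrib_right mult.assoc)
    also have "\<dots> = (\<Sum>i=1..CARD('n). \<Sum>j'\<in>UNIV. of_int (l i) * (of_int (C i $ j') * z $ j'))"
      by (rule sum.swap)
    also have "\<dots> = (\<Sum>i=1..CARD('n). of_int (l i) * (cvec C i \<bullet> z))"
      by (simp add: cvec_inner sum_distrib_left)
    finally show "z $ j = (\<Sum>i=1..CARD('n). of_int (l i) * (cvec C i \<bullet> z))" .
  qed
qed

lemma int_from_c:
  fixes C :: "nat \<Rightarrow> int^'n"
  assumes "lattice_basis C" "\<forall>i\<in>{1..CARD('n)}. cvec C i \<bullet> z \<in> \<int>"
  shows "intpt z"
  unfolding intpt_def
proof
  fix j
  obtain l :: "nat\<Rightarrow>int" where l: "\<forall>z::real^'n. z $ j = (\<Sum>i=1..CARD('n). of_int (l i) * (cvec C i \<bullet> z))"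
    using unit_comb[OF assms(1)] by blast
  show "z $ j \<in> \<int>" unfolding l[rule_format]
    using assms(2) by (intro Ints_sum Ints_mult) auto
qed

lemma eq_from_c:
  fixes C :: "nat \<Rightarrow> int^'n"
  assumes "lattice_basis C" "\<forall>i\<in>{1..CARD('n)}. cvec C i \<bullet> x = cvec C i \<bullet> y"
  shows "x = y"
proof -
  have "(x - y) $ j = 0" for j
  proof -
    obtain l :: "nat\<Rightarrow>int" where l: "\<forall>z::real^'n. z $ j = (\<Sum>i=1..CARD('n). of_int (l i) * (cvec C i \<bullet> z))"
      using unit_comb[OF assms(1)] by blast
    show ?thesis unfolding l[rule_format]
      using assms(2) by (simp add: inner_diff_right)
  qed
  then show ?thesis by (metis vec_eq_iff right_minus_eq zero_index)
qed

lemma c_int: "intpt y \<Longrightarrow> cvec C i \<bullet> y \<in> \<int>"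
  unfolding cvec_inner intpt_def by (intro Ints_sum Ints_mult) auto



primrec lexset :: "(nat \<Rightarrow> int^'n) \<Rightarrow> (real^'n) set \<Rightarrow> nat \<Rightarrow> (real^'n) set" where
  "lexset C T 0 = T"
| "lexset C T (Suc p) = {x \<in> lexset C T p. \<forall>y\<in>lexset C T p. cvec C (Suc p) \<bullet> x \<le> cvec C (Suc p) \<bullet> y}"

lemma lexset_cpt: "compact T \<Longrightarrow> T \<noteq> {} \<Longrightarrow> compact (lexset C T p) \<and> lexset C T p \<noteq> {}"
proof (induction p)
  case 0 then show ?case by simp
next
  case (Suc p)
  let ?U = "lexset C T p" and ?c = "cvec C (Suc p)"
  have U: "compact ?U" "?U \<noteq> {}" using Suc by auto
  obtain y0 where y0: "y0 \<in> ?U" "\<forall>y\<in>?U. ?c \<bullet> y0 \<le> ?c \<bullet> y"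
    using continuous_attains_inf[OF U(1) U(2) continuous_on_inner[OF continuous_on_const continuous_on_id]]
    by blast
  have eq: "lexset C T (Suc p) = ?U \<inter> (\<Inter>y\<in>?U. {x. ?c \<bullet> x \<le> ?c \<bullet> y})" by auto
  have "closed (\<Inter>y\<in>?U. {x. ?c \<bullet> x \<le> ?c \<bullet> y})"
    by (intro closed_INT) (auto intro: closed_halfspace_le)
  then have "compact (lexset C T (Suc p))" unfolding eq using U by (intro compact_Int_closed) auto
  moreover have "y0 \<in> lexset C T (Suc p)" using y0 by simp
  ultimately show ?case by blast
qed

lemma lexset_sub: "lexset C T p \<subseteq> T"
  by (induction p) auto

lemma lexset_char:
  "\<forall>y\<in>lexset C T p. \<forall>x\<in>T. (x \<in> lexset C T p \<longleftrightarrow> (\<forall>i\<in>{1..p}. cvec C i \<bullet> x = cvec C i \<bullet> y)) \<and>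
     (x \<notin> lexset C T p \<longrightarrow> (\<exists>i\<in>{1..p}. cvec C i \<bullet> y < cvec C i \<bullet> x \<and> (\<forall>j\<in>{1..<i}. cvec C j \<bullet> y = cvec C j \<bullet> x)))"
proof (induction p)
  case 0 then show ?case by simp
next
  case (Suc p)
  show ?case
  proof (intro ballI conjI)
    fix y x assume y: "y \<in> lexset C T (Suc p)" and x: "x \<in> T"
    have yU: "y \<in> lexset C T p" using y by simp
    note IH = Suc[rule_format, OF yU x]
    have ymin: "\<forall>z\<in>lexset C T p. cvec C (Suc p) \<bullet> y \<le> cvec C (Suc p) \<bullet> z" using y by simp
    have ivl: "{1..Suc p} = insert (Suc p) {1..p}" by auto
    show "(x \<in> lexset C T (Suc p)) = (\<forall>i\<in>{1..Suc p}. cvec C i \<bullet> x = cvec C i \<bullet> y)"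
    proof (cases "x \<in> lexset C T p")
      case True
      have eqp: "\<forall>i\<in>{1..p}. cvec C i \<bullet> x = cvec C i \<bullet> y" using IH True by blast
      show ?thesis
      proof
        assume "x \<in> lexset C T (Suc p)"
        then have "cvec C (Suc p) \<bullet> x \<le> cvec C (Suc p) \<bullet> y" using yU by simp
        moreover have "cvec C (Suc p) \<bullet> y \<le> cvec C (Suc p) \<bullet> x" using ymin True by blast
        ultimately show "\<forall>i\<in>{1..Suc p}. cvec C i \<bullet> x = cvec C i \<bullet> y" using eqp unfolding ivl by auto
      next
        assume "\<forall>i\<in>{1..Suc p}. cvec C i \<bullet> x = cvec C i \<bullet> y"
        then have "cvec C (Suc p) \<bullet> x = cvec C (Suc p) \<bullet> y" by auto
        then show "x \<in> lexset C T (Suc p)" using True ymin by simp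
      qed
    next
      case False
      then have "\<not> (\<forall>i\<in>{1..p}. cvec C i \<bullet> x = cvec C i \<bullet> y)" using IH by blast
      then have "\<not> (\<forall>i\<in>{1..Suc p}. cvec C i \<bullet> x = cvec C i \<bullet> y)" by auto
      moreover have "x \<notin> lexset C T (Suc p)" using False by simp
      ultimately show ?thesis by blast
    qed
    show "x \<notin> lexset C T (Suc p) \<longrightarrow>
      (\<exists>i\<in>{1..Suc p}. cvec C i \<bullet> y < cvec C i \<bullet> x \<and> (\<forall>j\<in>{1..<i}. cvec C j \<bullet> y = cvec C j \<bullet> x))"
    proof
      assume nx: "x \<notin> lexset C T (Suc p)"
      show "\<exists>i\<in>{1..Suc p}. cvec C i \<bullet> y < cvec C i \<bullet> x \<and> (\<forall>j\<in>{1..<i}. cvec C j \<bullet> y = cvec C j \<bullet> x)"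
      proof (cases "x \<in> lexset C T p")
        case True
        have eqp: "\<forall>i\<in>{1..p}. cvec C i \<bullet> x = cvec C i \<bullet> y" using IH True by blast
        have "cvec C (Suc p) \<bullet> y \<le> cvec C (Suc p) \<bullet> x" using ymin True by blast
        moreover have "cvec C (Suc p) \<bullet> y \<noteq> cvec C (Suc p) \<bullet> x"
        proof
          assume e: "cvec C (Suc p) \<bullet> y = cvec C (Suc p) \<bullet> x"
          then have "x \<in> lexset C T (Suc p)" using True ymin by auto
          with nx show False by simp
        qed
        ultimately show ?thesis using eqp
          by (intro bexI[of _ "Suc p"]) auto
      next
        case False
        then obtain i where "i\<in>{1..p}" "cvec C i \<bullet> y < cvec C i \<bullet> x" "\<forall>j\<in>{1..<i}. cvec C j \<bullet> y = cvec C j \<bullet> x"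
          using IH by blast
        then show ?thesis by (intro bexI[of _ i]) auto
      qed
    qed
  qed
qed

lemma lexless_asym:
  fixes C :: "nat \<Rightarrow> int^'n"
  shows "lexless C x y \<Longrightarrow> \<not> lexless C y x"
proof
  assume a: "lexless C x y" "lexless C y x"
  from a(1) obtain i where i: "cvec C i \<bullet> x < cvec C i \<bullet> y" "\<forall>j\<in>{1..<i}. cvec C j \<bullet> x = cvec C j \<bullet> y" "1 \<le> i"
    unfolding lexless_def by auto
  from a(2) obtain i' where i': "cvec C i' \<bullet> y < cvec C i' \<bullet> x" "\<forall>j\<in>{1..<i'}. cvec C j \<bullet> y = cvec C j \<bullet> x" "1 \<le> i'"
    unfolding lexless_def by auto
  show False
  proof (cases i i' rule: linorder_cases)
    case less
    then have "i \<in> {1..<i'}" using i(3) by simp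
    then have "cvec C i \<bullet> y = cvec C i \<bullet> x" using i'(2) by blast
    with i(1) show False by simp
  next
    case equal then show ?thesis using i(1) i'(1) by simp
  next
    case greater
    then have "i' \<in> {1..<i}" using i'(3) by simp
    then have "cvec C i' \<bullet> x = cvec C i' \<bullet> y" using i(2) by blast
    with i'(1) show False by simp
  qed
qed

lemma lexmin_prop:
  fixes C :: "nat \<Rightarrow> int^'n"
  assumes lb: "lattice_basis C" and T: "compact T" "T \<noteq> {}"
  shows "lexmin C T \<in> T \<and> (\<forall>x\<in>T - {lexmin C T}. lexless C (lexmin C T) x)"
proof -
  obtain y where y: "y \<in> lexset C T CARD('n)" using lexset_cpt[OF T] by blast
  have yT: "y \<in> T" using y lexset_sub by blast
  have P: "y \<in> T \<and> (\<forall>x\<in>T - {y}. lexless C y x)"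
  proof (intro conjI yT ballI)
    fix x assume x: "x \<in> T - {y}"
    note ch = lexset_char[rule_format, OF y, of x]
    have "x \<notin> lexset C T CARD('n)"
    proof
      assume "x \<in> lexset C T CARD('n)"
      then have "x = y" using ch x eq_from_c[OF lb] by auto
      with x show False by simp
    qed
    then show "lexless C y x" using ch x unfolding lexless_def by auto
  qed
  have "lexmin C T = y"
    unfolding lexmin_def
  proof (rule the_equality)
    show "y \<in> T \<and> (\<forall>x\<in>T - {y}. lexless C y x)" by (rule P)
    fix xb assume xb: "xb \<in> T \<and> (\<forall>x\<in>T - {xb}. lexless C xb x)"
    show "xb = y"
    proof (rule ccontr)
      assume "xb \<noteq> y"
      then have "lexless C xb y" "lexless C y xb" using xb P by auto
      then show False using lexless_asym by blast
    qed
  qed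
  then show ?thesis using P by simp
qed



lemma Kcone_closed: "closed (Kcone C)"
proof -
  have "Kcone C = (\<Inter>i\<in>{1..CARD('a)}. {x. cvec C i \<bullet> x \<ge> 0})" for C :: "nat \<Rightarrow> int^'a"
    unfolding Kcone_def by auto
  then show ?thesis by (auto intro!: closed_INT closed_halfspace_ge)
qed

lemma halfspace_closed: "closed (cut_halfspace C xb)"
proof -
  define k where "k = cut_index C xb"
  define d where "d = cut_coeff C xb k"
  define rhs where "rhs = (\<Sum>i=1..k-1. d i * (cvec C i \<bullet> xb)) + d k * of_int \<lceil>cvec C k \<bullet> xb\<rceil>"
  have "cut_halfspace C xb = {x. (\<Sum>i=1..k. d i *\<^sub>R cvec C i) \<bullet> x \<ge> rhs}"
    unfolding cut_halfspace_def Let_def k_def[symmetric] d_def[symmetric] rhs_def[symmetric]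
    by (simp add: inner_sum_left)
  then show ?thesis by (simp add: closed_halfspace_ge)
qed

lemma state_props:
  assumes "compact S"
  shows "compact (alg_state C S m) \<and> alg_state C S m \<subseteq> Kcone C"
proof (induction m)
  case 0
  have "compact ((\<lambda>x. x - t) ` S)" for t :: "real^'a"
    by (intro compact_continuous_image assms continuous_intros)
  then show ?case unfolding alg_state.simps init_set_def Let_def
    by (auto intro!: compact_Int_closed Kcone_closed)
next
  case (Suc m)
  then show ?case
    by (auto simp: Let_def intro!: compact_Int_closed halfspace_closed)
qed

lemma state_mono: "alg_state C S (Suc m) \<subseteq> alg_state C S m"
  by (auto simp: Let_def)

lemma state_mono': "m \<le> m' \<Longrightarrow> alg_state C S m' \<subseteq> alg_state C S m"
proof (induction m' rule: dec_induct)
  case base then show ?case by simp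
next
  case (step m') then show ?case using state_mono by blast
qed

lemma cut_index_prop:
  fixes C :: "nat \<Rightarrow> int^'n"
  assumes lb: "lattice_basis C" and ni: "\<not> intpt xb"
  shows "cut_index C xb \<in> {1..CARD('n)} \<and> cvec C (cut_index C xb) \<bullet> xb \<notin> \<int> \<and>
         (\<forall>i\<in>{1..<cut_index C xb}. cvec C i \<bullet> xb \<in> \<int>)"
proof -
  have ex: "\<exists>k. k \<in> {1..CARD('n)} \<and> cvec C k \<bullet> xb \<notin> \<int>"
    using int_from_c[OF lb, of xb] ni by blast
  have "cut_index C xb \<in> {1..CARD('n)} \<and> cvec C (cut_index C xb) \<bullet> xb \<notin> \<int>"
    unfolding cut_index_def using ex by (rule LeastI_ex)
  moreover have "\<forall>i\<in>{1..<cut_index C xb}. cvec C i \<bullet> xb \<in> \<int>"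
  proof
    fix i assume i: "i \<in> {1..<cut_index C xb}"
    then have "i < (LEAST k. k \<in> {1..CARD('n)} \<and> cvec C k \<bullet> xb \<notin> \<int>)" by (simp add: cut_index_def)
    from not_less_Least[OF this] have "\<not> (i \<in> {1..CARD('n)} \<and> cvec C i \<bullet> xb \<notin> \<int>)" .
    moreover have "i \<in> {1..CARD('n)}" using i calculation \<open>cut_index C xb \<in> {1..CARD('n)} \<and> _\<close> by auto
    ultimately show "cvec C i \<bullet> xb \<in> \<int>" by blast
  qed
  ultimately show ?thesis by blast
qed

lemma sum_split_top: "1 \<le> (k::nat) \<Longrightarrow> (\<Sum>i=1..k. f i) = (\<Sum>i\<in>{1..<k}. f i) + (f k :: real)"
 proof -
  assume "1 \<le> k"
  then have "{1..k} = insert k {1..<k}" by auto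
  then show ?thesis by simp
qed

lemma ivl_km1: "1 \<le> k \<Longrightarrow> {1..k-1} = {1..<(k::nat)}"
  by auto

lemma cut_halfspace_iff:
  assumes "1 \<le> cut_index C xb"
  shows "x \<in> cut_halfspace C xb \<longleftrightarrow>
    (\<Sum>i\<in>{1..<cut_index C xb}. cut_coeff C xb (cut_index C xb) i * (cvec C i \<bullet> x)) + cvec C (cut_index C xb) \<bullet> x \<ge>
    (\<Sum>i\<in>{1..<cut_index C xb}. cut_coeff C xb (cut_index C xb) i * (cvec C i \<bullet> xb)) + of_int \<lceil>cvec C (cut_index C xb) \<bullet> xb\<rceil>"
proof -
  define k where "k = cut_index C xb"
  define d where "d = cut_coeff C xb k"
  have k1: "1 \<le> k" using assms k_def by simp
  have dk: "d k = 1" unfolding d_def cut_coeff_def by simp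
  have "(\<Sum>i=1..k. d i * (cvec C i \<bullet> x)) = (\<Sum>i\<in>{1..<k}. d i * (cvec C i \<bullet> x)) + d k * (cvec C k \<bullet> x)"
    by (rule sum_split_top[OF k1])
  moreover have "{1..k-1} = {1..<k}" using ivl_km1[OF k1] .
  ultimately show ?thesis unfolding cut_halfspace_def Let_def k_def[symmetric] d_def[symmetric]
    using dk by simp
qed

lemma cut_progress:
  assumes k1: "1 \<le> cut_index C xb" and x: "x \<in> cut_halfspace C xb"
    and eq: "\<forall>i\<in>{1..<cut_index C xb}. cvec C i \<bullet> x = cvec C i \<bullet> xb"
  shows "cvec C (cut_index C xb) \<bullet> x \<ge> of_int \<lceil>cvec C (cut_index C xb) \<bullet> xb\<rceil>"
proof -
  have "(\<Sum>i\<in>{1..<cut_index C xb}. cut_coeff C xb (cut_index C xb) i * (cvec C i \<bullet> x)) =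
        (\<Sum>i\<in>{1..<cut_index C xb}. cut_coeff C xb (cut_index C xb) i * (cvec C i \<bullet> xb))"
    using eq by (intro sum.cong) auto
  then show ?thesis using x unfolding cut_halfspace_iff[OF k1] by linarith
qed

lemma coeff_form:
  assumes "i < k"
  shows "cut_coeff C xb k i = of_int \<lceil>cvec C k \<bullet> xb\<rceil> * (\<Prod>j\<in>{i+1..<k}. cvec C j \<bullet> xb + 1)"
proof -
  have "{i+1..k-1} = {i+1..<k}" using assms by auto
  then show ?thesis using assms unfolding cut_coeff_def by auto
qed

lemma telescope:
  fixes a :: "nat \<Rightarrow> real" and r :: real and k :: nat
  defines "D \<equiv> \<lambda>i. r * (\<Prod>l\<in>{i+1..<k}. a l + 1)"
  shows "j < k \<Longrightarrow> D j = (\<Sum>i\<in>{j+1..<k}. D i * a i) + r"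
proof (induction "k - j - 1" arbitrary: j)
  case 0
  then have "j + 1 = k" by simp
  then show ?case unfolding D_def by simp
next
  case (Suc t)
  then have jk: "j + 1 < k" by simp
  have IH: "D (j+1) = (\<Sum>i\<in>{j+2..<k}. D i * a i) + r"
    using Suc(1)[of "j+1"] Suc(2) jk by (simp add: numeral_2_eq_2)
  have s: "(\<Sum>i\<in>{j+1..<k}. D i * a i) = D (j+1) * a (j+1) + (\<Sum>i\<in>{j+2..<k}. D i * a i)"
    using jk by (simp add: sum.atLeast_Suc_lessThan numeral_2_eq_2)
  have p: "D j = (a (j+1) + 1) * D (j+1)"
    unfolding D_def using jk by (simp add: prod.atLeast_Suc_lessThan numeral_2_eq_2)
  show ?case using IH s p by (simp add: algebra_simps)
qed



lemma int_lt_plus1: "a \<in> \<int> \<Longrightarrow> b \<in> \<int> \<Longrightarrow> a < b \<Longrightarrow> a + 1 \<le> (b::real)"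
proof -
  assume "a \<in> \<int>" "b \<in> \<int>" "a < b"
  then obtain m m' where "a = of_int m" "b = of_int m'" by (auto elim!: Ints_cases)
  with \<open>a < b\<close> show ?thesis by simp
qed

lemma cut_valid:
  fixes C :: "nat \<Rightarrow> int^'n"
  assumes lb: "lattice_basis C" and T: "compact T" "T \<noteq> {}" "T \<subseteq> Kcone C"
    and ni: "\<not> intpt (lexmin C T)"
  shows "(\<forall>y\<in>T. intpt y \<longrightarrow> y \<in> cut_halfspace C (lexmin C T)) \<and> lexmin C T \<notin> cut_halfspace C (lexmin C T)"
proof -
  define xb where "xb = lexmin C T"
  have xbT: "xb \<in> T" and lm: "\<forall>x\<in>T-{xb}. lexless C xb x"
    using lexmin_prop[OF lb T(1,2)] unfolding xb_def by auto
  have nxb: "\<not> intpt xb" using ni xb_def by simp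
  define k where "k = cut_index C xb"
  have kp: "k \<in> {1..CARD('n)}" "cvec C k \<bullet> xb \<notin> \<int>" "\<forall>i\<in>{1..<k}. cvec C i \<bullet> xb \<in> \<int>"
    using cut_index_prop[OF lb nxb] unfolding k_def by auto
  have k1: "1 \<le> cut_index C xb" using kp(1) k_def by simp
  define a where "a = (\<lambda>i. cvec C i \<bullet> xb)"
  define r where "r = (of_int \<lceil>a k\<rceil> :: real)"
  define d where "d = cut_coeff C xb k"
  have H: "z \<in> cut_halfspace C xb \<longleftrightarrow>
     (\<Sum>i\<in>{1..<k}. d i * (cvec C i \<bullet> z)) + cvec C k \<bullet> z \<ge> (\<Sum>i\<in>{1..<k}. d i * a i) + r" for z
    unfolding cut_halfspace_iff[OF k1] a_def r_def d_def k_def by simp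
  have anon: "\<forall>i\<in>{1..CARD('n)}. a i \<ge> 0" using xbT T(3) unfolding Kcone_def a_def by auto
  have r0: "r \<ge> 0"
  proof -
    have "a k \<ge> 0" using anon kp(1) by blast
    then show ?thesis unfolding r_def by simp
  qed
  have akr: "a k < r"
  proof -
    have "a k \<le> r" unfolding r_def by simp
    moreover have "a k \<noteq> r" using kp(2) unfolding r_def a_def by (metis Ints_of_int)
    ultimately show ?thesis by simp
  qed
  have dform: "d i = r * (\<Prod>l\<in>{i+1..<k}. a l + 1)" if "i < k" for i
    unfolding d_def r_def a_def using coeff_form[OF that] by simp
  have dnn: "d i \<ge> 0" if "i < k" for i
  proof -
    have "(\<Prod>l\<in>{i+1..<k}. a l + 1) \<ge> 0"
      using anon kp(1) by (intro prod_nonneg) (auto simp: add_nonneg_nonneg)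
    then show ?thesis using dform[OF that] r0 by simp
  qed
  have tel: "d j = (\<Sum>i\<in>{j+1..<k}. d i * a i) + r" if "j < k" for j
  proof -
    have "(\<Sum>i\<in>{j+1..<k}. d i * a i) = (\<Sum>i\<in>{j+1..<k}. (r * (\<Prod>l\<in>{i+1..<k}. a l + 1)) * a i)"
      by (intro sum.cong) (auto simp: dform)
    then show ?thesis using telescope[OF that, of r a] dform[OF that] by simp
  qed
  have part2: "xb \<notin> cut_halfspace C xb"
    unfolding H using akr unfolding a_def by simp
  have part1: "y \<in> cut_halfspace C xb" if yT: "y \<in> T" and yi: "intpt y" for y
  proof -
    define b where "b = (\<lambda>i. cvec C i \<bullet> y)"
    have bint: "b i \<in> \<int>" for i unfolding b_def using c_int[OF yi] .
    have bnn: "\<forall>i\<in>{1..CARD('n)}. b i \<ge> 0" using yT T(3) unfolding Kcone_def b_def by auto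
    have "y \<noteq> xb" using yi nxb by auto
    then have "lexless C xb y" using lm yT by auto
    then obtain j where j: "j \<in> {1..CARD('n)}" "a j < b j" "\<forall>i\<in>{1..<j}. a i = b i"
      unfolding lexless_def a_def b_def by auto
    have Hy: "y \<in> cut_halfspace C xb \<longleftrightarrow> (\<Sum>i\<in>{1..<k}. d i * b i) + b k \<ge> (\<Sum>i\<in>{1..<k}. d i * a i) + r"
      unfolding H b_def ..
    show ?thesis
    proof (cases j k rule: linorder_cases)
      case greater
      then have "a k = b k" using j(3) kp(1) by auto
      then show ?thesis using kp(2) bint[of k] unfolding a_def by simp
    next
      case equal
      have "(\<Sum>i\<in>{1..<k}. d i * b i) = (\<Sum>i\<in>{1..<k}. d i * a i)"
        using j(3) equal by (intro sum.cong) auto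
      moreover have "r \<le> b k"
      proof -
        obtain m where m: "b k = of_int m" using bint[of k] Ints_cases by blast
        have "a k \<le> of_int m" using j(2) equal m by simp
        then have "\<lceil>a k\<rceil> \<le> m" by (simp add: ceiling_le)
        then show ?thesis unfolding r_def m by simp
      qed
      ultimately show ?thesis unfolding Hy by simp
    next
      case less
      have jk: "1 \<le> j" "j \<le> k" using j(1) less by auto
      have split: "(\<Sum>i\<in>{1..<k}. f i) = (\<Sum>i\<in>{1..<j}. f i) + (f j + (\<Sum>i\<in>{j+1..<k}. f i))" for f :: "nat \<Rightarrow> real"
        using sum.atLeastLessThan_concat[OF jk, of f] sum.atLeast_Suc_lessThan[OF less, of f] by simp
      have X: "(\<Sum>i\<in>{1..<j}. d i * b i) = (\<Sum>i\<in>{1..<j}. d i * a i)"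
        using j(3) by (intro sum.cong) auto
      have bj: "b j \<ge> a j + 1"
        using int_lt_plus1[OF _ bint[of j] j(2)] kp(3) j(1) less unfolding a_def by auto
      have "d j * b j \<ge> d j * (a j + 1)" using bj dnn[OF less] by (rule mult_left_mono)
      moreover have "(\<Sum>i\<in>{j+1..<k}. d i * b i) \<ge> 0"
        using bnn kp(1) dnn by (intro sum_nonneg mult_nonneg_nonneg) auto
      moreover have "b k \<ge> 0" using bnn kp(1) by auto
      moreover note tel[OF less]
      moreover have "d j * (a j + 1) = d j * a j + d j" by (simp add: algebra_simps)
      ultimately show ?thesis unfolding Hy split[of "\<lambda>i. d i * b i"] split[of "\<lambda>i. d i * a i"] X
        by linarith
    qed
  qed
  show ?thesis using part1 part2 unfolding xb_def by blast
qed



lemma chain_mono: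
  fixes g :: "nat \<Rightarrow> int"
  assumes "\<forall>m\<ge>M. g m \<le> g (Suc m)" "M \<le> a" "a \<le> b"
  shows "g a \<le> g b"
  using assms(3)
proof (induction b rule: dec_induct)
  case base then show ?case by simp
next
  case (step b)
  then have "g b \<le> g (Suc b)" using assms(1,2) by auto
  with step show ?case by simp
qed

lemma eventually_const:
  fixes g :: "nat \<Rightarrow> int"
  assumes mono: "\<forall>m\<ge>M. g m \<le> g (Suc m)" and bnd: "\<forall>m. g m \<le> B"
  shows "\<exists>M'\<ge>M. \<forall>m\<ge>M'. g m = g M'"
proof -
  let ?V = "g ` {M..}"
  have sub: "?V \<subseteq> {g M..B}" using chain_mono[OF mono] bnd by auto
  then have fin: "finite ?V" by (rule finite_subset) simp
  have ne: "?V \<noteq> {}" by auto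
  have "Max ?V \<in> ?V" using fin ne by (rule Max_in)
  then obtain M' where M': "M' \<ge> M" "g M' = Max ?V" by auto
  have "\<forall>m\<ge>M'. g m = g M'"
  proof (intro allI impI)
    fix m assume "m \<ge> M'"
    then have "g M' \<le> g m" using chain_mono[OF mono M'(1)] by simp
    moreover have "g m \<le> Max ?V" using fin \<open>m \<ge> M'\<close> M'(1) by (intro Max_ge) auto
    ultimately show "g m = g M'" using M'(2) by simp
  qed
  with M' show ?thesis by blast
qed

lemma alg_terminates:
  fixes C :: "nat \<Rightarrow> int^'n"
  assumes lb: "lattice_basis C" and cS: "compact S"
    and contra: "\<forall>m. alg_state C S m \<noteq> {} \<and> \<not> intpt (lexmin C (alg_state C S m))"
  shows False
proof -
  define st where "st = alg_state C S"
  define xb where "xb = (\<lambda>m. lexmin C (st m))"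
  have stp: "compact (st m)" "st m \<subseteq> Kcone C" "st m \<noteq> {}" "\<not> intpt (xb m)" for m
    using state_props[OF cS, of C m] contra unfolding st_def xb_def by auto
  have xbin: "xb m \<in> st m" for m using lexmin_prop[OF lb stp(1,3)] unfolding xb_def by blast
  have lm: "\<forall>x\<in>st m - {xb m}. lexless C (xb m) x" for m
    using lexmin_prop[OF lb stp(1,3)] unfolding xb_def by blast
  have stS: "st (Suc m) = st m \<inter> cut_halfspace C (xb m)" for m
    using stp(3,4)[of m] unfolding st_def xb_def by (simp add: Let_def)
  have cv: "xb m \<notin> cut_halfspace C (xb m)" for m
    using cut_valid[OF lb stp(1,3,2) stp(4)[unfolded xb_def]] unfolding xb_def by blast
  have xbH: "xb (Suc m) \<in> cut_halfspace C (xb m)" and xbst: "xb (Suc m) \<in> st m" for m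
    using xbin[of "Suc m"] stS[of m] by auto
  have lsuc: "lexless C (xb m) (xb (Suc m))" for m
  proof -
    have "xb (Suc m) \<noteq> xb m" using xbH[of m] cv[of m] by auto
    then show ?thesis using lm[of m] xbst[of m] by auto
  qed
  have st0: "st m \<subseteq> st 0" for m unfolding st_def using state_mono'[of 0 m] by simp
  obtain R where R: "\<forall>x\<in>st 0. norm x \<le> R"
    using compact_imp_bounded[OF stp(1)[of 0]] unfolding bounded_iff by blast
  have bnd: "\<bar>cvec C i \<bullet> xb m\<bar> \<le> norm (cvec C i) * R" for i m
  proof -
    have "\<bar>cvec C i \<bullet> xb m\<bar> \<le> norm (cvec C i) * norm (xb m)" by (rule Cauchy_Schwarz_ineq2)
    also have "\<dots> \<le> norm (cvec C i) * R" using R st0 xbin by (intro mult_left_mono) auto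
    finally show ?thesis .
  qed
  have claim: "p \<le> CARD('n) \<Longrightarrow> \<exists>M. \<forall>m\<ge>M. \<forall>i\<in>{1..p}. cvec C i \<bullet> xb m = cvec C i \<bullet> xb M \<and> cvec C i \<bullet> xb M \<in> \<int>" for p
  proof (induction p)
    case 0 then show ?case by simp
  next
    case (Suc p)
    then obtain M where M: "\<forall>m\<ge>M. \<forall>i\<in>{1..p}. cvec C i \<bullet> xb m = cvec C i \<bullet> xb M \<and> cvec C i \<bullet> xb M \<in> \<int>"
      by auto
    define q where "q = Suc p"
    have qn: "q \<in> {1..CARD('n)}" using Suc(2) q_def by simp
    define a where "a = (\<lambda>m. cvec C q \<bullet> xb m)"
    have amono: "a m \<le> a (Suc m)" if "m \<ge> M" for m
    proof -
      obtain i where i: "i \<in> {1..CARD('n)}" "cvec C i \<bullet> xb m < cvec C i \<bullet> xb (Suc m)"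
          "\<forall>j\<in>{1..<i}. cvec C j \<bullet> xb m = cvec C j \<bullet> xb (Suc m)"
        using lsuc[of m] unfolding lexless_def by blast
      show ?thesis
      proof (cases i q rule: linorder_cases)
        case less
        then have "i \<in> {1..p}" using i(1) q_def by auto
        then have "cvec C i \<bullet> xb m = cvec C i \<bullet> xb (Suc m)"
          using M[rule_format, OF that, of i] M[rule_format, of "Suc m" i] that by simp
        with i(2) show ?thesis by simp
      next
        case equal then show ?thesis using i(2) unfolding a_def by simp
      next
        case greater
        then have "q \<in> {1..<i}" using q_def by simp
        then show ?thesis using i(3) unfolding a_def by simp
      qed
    qed
    have ajump: "a (Suc m) \<ge> of_int \<lceil>a m\<rceil>" if "m \<ge> M" "a m \<notin> \<int>" for m
    proof -
      define k where "k = cut_index C (xb m)"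
      have kp: "k \<in> {1..CARD('n)}" "cvec C k \<bullet> xb m \<notin> \<int>" "\<forall>i\<in>{1..<k}. cvec C i \<bullet> xb m \<in> \<int>"
        using cut_index_prop[OF lb stp(4)[of m]] unfolding k_def by auto
      have "k = q"
      proof (cases k q rule: linorder_cases)
        case less
        then have "k \<in> {1..p}" using kp(1) q_def by auto
        then have "cvec C k \<bullet> xb m \<in> \<int>" using M[rule_format, OF that(1), of k] by simp
        with kp(2) show ?thesis by simp
      next
        case greater
        then have "q \<in> {1..<k}" using q_def by simp
        then show ?thesis using kp(3) that(2) unfolding a_def by simp
      qed simp
      have eq: "\<forall>i\<in>{1..<cut_index C (xb m)}. cvec C i \<bullet> xb (Suc m) = cvec C i \<bullet> xb m"
      proof
        fix i assume "i \<in> {1..<cut_index C (xb m)}"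
        then have "i \<in> {1..p}" using \<open>k = q\<close> k_def q_def by auto
        then show "cvec C i \<bullet> xb (Suc m) = cvec C i \<bullet> xb m"
          using M[rule_format, OF that(1), of i] M[rule_format, of "Suc m" i] that(1) by simp
      qed
      have "1 \<le> cut_index C (xb m)" using kp(1) k_def by simp
      from cut_progress[OF this xbH[of m] eq] show ?thesis
        using \<open>k = q\<close> unfolding k_def a_def by simp
    qed
    define g where "g = (\<lambda>m. \<lfloor>a m\<rfloor> + \<lceil>a m\<rceil>)"
    have gmono: "\<forall>m\<ge>M. g m \<le> g (Suc m)"
    proof (intro allI impI)
      fix m assume "m \<ge> M"
      then have "a m \<le> a (Suc m)" by (rule amono)
      then have "\<lfloor>a m\<rfloor> \<le> \<lfloor>a (Suc m)\<rfloor>" "\<lceil>a m\<rceil> \<le> \<lceil>a (Suc m)\<rceil>"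
        by (rule floor_mono, rule ceiling_mono)
      then show "g m \<le> g (Suc m)" unfolding g_def by linarith
    qed
    define B where "B = norm (cvec C q) * R"
    have gb: "\<forall>m. g m \<le> 2 * \<lceil>B\<rceil>"
    proof
      fix m
      have "a m \<le> B" using bnd[of q m] unfolding a_def B_def by linarith
      then have c1: "\<lceil>a m\<rceil> \<le> \<lceil>B\<rceil>" by (rule ceiling_mono)
      have "\<lfloor>a m\<rfloor> \<le> \<lceil>a m\<rceil>" by simp
      with c1 have "\<lfloor>a m\<rfloor> \<le> \<lceil>B\<rceil>" by linarith
      with c1 show "g m \<le> 2 * \<lceil>B\<rceil>" unfolding g_def by linarith
    qed
    obtain M' where M': "M' \<ge> M" "\<forall>m\<ge>M'. g m = g M'"
      using eventually_const[OF gmono gb] by blast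
    have aint: "a m \<in> \<int>" if "m \<ge> M'" for m
    proof (rule ccontr)
      assume ni: "a m \<notin> \<int>"
      have j: "a (Suc m) \<ge> of_int \<lceil>a m\<rceil>" using ajump[OF _ ni] that M'(1) by simp
      then have f: "\<lfloor>a (Suc m)\<rfloor> \<ge> \<lceil>a m\<rceil>" by (simp add: le_floor_iff)
      have c: "\<lceil>a (Suc m)\<rceil> \<ge> \<lceil>a m\<rceil>" using ceiling_mono[OF j] by simp
      have "\<lfloor>a m\<rfloor> \<noteq> \<lceil>a m\<rceil>"
      proof
        assume e: "\<lfloor>a m\<rfloor> = \<lceil>a m\<rceil>"
        have h1: "of_int \<lfloor>a m\<rfloor> \<le> a m" by (rule of_int_floor_le)
        have h2: "a m \<le> of_int \<lfloor>a m\<rfloor>" using le_of_int_ceiling[of "a m", folded e] .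
        from h1 h2 have "a m = of_int \<lfloor>a m\<rfloor>" by linarith
        then show False using ni by (metis Ints_of_int)
      qed
      moreover have "\<lfloor>a m\<rfloor> \<le> \<lceil>a m\<rceil>" by simp
      ultimately have "\<lfloor>a m\<rfloor> < \<lceil>a m\<rceil>" by linarith
      then have "g m < g (Suc m)" using f c unfolding g_def by simp
      moreover have "g m = g (Suc m)"
      proof -
        have "Suc m \<ge> M'" using that by simp
        then show ?thesis using M'(2)[rule_format, OF that] M'(2)[rule_format, of "Suc m"] by simp
      qed
      ultimately show False by simp
    qed
    have aconst: "a m = a M'" if mM: "m \<ge> M'" for m
    proof -
      obtain z where z: "a m = of_int z" using aint[OF mM] Ints_cases by blast
      obtain z' where z': "a M' = of_int z'" using aint[of M'] Ints_cases by blast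
      have "g m = g M'" using M'(2)[rule_format, OF mM] .
      then have "z + z = z' + z'" unfolding g_def z z' by simp
      then show ?thesis using z z' by simp
    qed
    show ?case
    proof (intro exI allI impI ballI)
      fix m i assume m: "m \<ge> M'" and i: "i \<in> {1..Suc p}"
      show "cvec C i \<bullet> xb m = cvec C i \<bullet> xb M' \<and> cvec C i \<bullet> xb M' \<in> \<int>"
      proof (cases "i = q")
        case True
        then show ?thesis using aconst[OF m] aint[of M'] unfolding a_def by simp
      next
        case False
        then have "i \<in> {1..p}" using i q_def by auto
        moreover have "m \<ge> M" "M' \<ge> M" using m M'(1) by simp_all
        ultimately show ?thesis using M[rule_format, of m i] M[rule_format, of M' i] by simp
      qed
    qed
  qed
  obtain M where M: "\<forall>m\<ge>M. \<forall>i\<in>{1..CARD('n)}. cvec C i \<bullet> xb m = cvec C i \<bullet> xb M \<and> cvec C i \<bullet> xb M \<in> \<int>"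
    using claim by blast
  then have "intpt (xb M)" using int_from_c[OF lb] by blast
  with stp(4) show False by blast
qed


theorem proposition2:
  fixes C :: "nat \<Rightarrow> int^'n" and S :: "(real^'n) set" and Fam :: "(real^'n) set set"
  assumes "\<forall>T\<in>Fam. compact T"
    and "\<forall>T\<in>Fam. \<forall>a b. a \<noteq> 0 \<longrightarrow> T \<inter> {x. a \<bullet> x \<ge> b} \<in> Fam"
    and "S \<in> Fam" and "S \<noteq> {}"
    and "C 1 \<noteq> 0" and "Gcd (range (\<lambda>j. C 1 $ j)) = 1"
    and "lattice_basis C"
  shows "(\<forall>m. alg_state C S m \<noteq> {} \<and> \<not> intpt (lexmin C (alg_state C S m)) \<longrightarrow>
            (\<forall>y\<in>alg_state C S m. intpt y \<longrightarrow>
                y \<in> cut_halfspace C (lexmin C (alg_state C S m))) \<and>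
            lexmin C (alg_state C S m) \<notin> cut_halfspace C (lexmin C (alg_state C S m)))
       \<and> (\<exists>m. alg_state C S m = {} \<or> intpt (lexmin C (alg_state C S m)))"
proof -
  have cS: "compact S" using assms(1,3) by blast
  have lb: "lattice_basis C" by (rule assms(7))
  have P1: "(\<forall>y\<in>alg_state C S m. intpt y \<longrightarrow> y \<in> cut_halfspace C (lexmin C (alg_state C S m))) \<and>
            lexmin C (alg_state C S m) \<notin> cut_halfspace C (lexmin C (alg_state C S m))"
    if "alg_state C S m \<noteq> {}" "\<not> intpt (lexmin C (alg_state C S m))" for m
  proof -
    have "compact (alg_state C S m)" "alg_state C S m \<subseteq> Kcone C" using state_props[OF cS] by blast+
    then show ?thesis using cut_valid[OF lb _ that(1) _ that(2)] by blast
  qed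
  have P2: "\<exists>m. alg_state C S m = {} \<or> intpt (lexmin C (alg_state C S m))"
    using alg_terminates[OF lb cS] by blast
  show ?thesis using P1 P2 by blast
qed

end
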